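(* Let $Q := (-1/2,1/2) \times (-1/2,1/2) \subset \mathbb{R}^{2}$ and let $\chi_{\varepsilon}(x) := \varepsilon^{-2}\chi_{Q}(x/\varepsilon)$ for $\varepsilon > 0$. Let $\mu$ be a compactly supported Radon measure on $\mathbb{R}^{2}$ and write $\mu_{\varepsilon} := \chi_{\varepsilon} \ast \mu$ (a function on $\mathbb{R}^2$). Then for every $t \in \mathbb{R}$ such that the sliced measure $\mu_{t} := \mu_{\rho_{2},t}$ exists, \[ \int_{\mathbb{R}^{2}} \eta \, d\mu_{t} = \lim_{\varepsilon \to 0} \int_{\mathbb{R}} \eta(s,t)\mu_{\varepsilon}(s,t) \, ds \quad \text{for all } \eta \in C(\mathbb{R}^{2}). \] Moreover, the convergence is uniform on any family $K \subset C(\mathbb{R}^{2})$ which is compact in the sup-norm topology.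
   Context: $\rho_2 \colon \mathbb{R}^2 \to \mathbb{R}$, $\rho_2(x_1,x_2) = x_2$. For a compactly supported Radon measure $\mu$ on $\mathbb{R}^2$ and $t \in \mathbb{R}$, the sliced measure $\mu_{\rho_2,t}$ is said to exist if for every $\eta \in C(\mathbb{R}^{2})$ the limit $\lim_{\delta \to 0}(2\delta)^{-1}\int_{\rho_2^{-1}(t-\delta,t+\delta)} \eta \, d\mu$ exists; $\mu_{\rho_2,t}$ is then the Radon measure with $\int \eta \, d\mu_{\rho_2,t}$ equal to this limit (it is supported in $\operatorname{spt}\mu \cap \rho_2^{-1}\{t\}$). It exists for $\mathcal{L}^1$-almost every $t$. *)

theory Defs
  imports "HOL-Analysis.Analysis"
begin

definition rho2 :: "real \<times> real \<Rightarrow> real" where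
  "rho2 x = snd x"

definition Qbox :: "(real \<times> real) set" where
  "Qbox = {x. -1/2 < fst x \<and> fst x < 1/2 \<and> -1/2 < snd x \<and> snd x < 1/2}"

definition chi_eps :: "real \<Rightarrow> real \<times> real \<Rightarrow> real" where
  "chi_eps \<epsilon> x = \<epsilon> powi (-2) * indicator Qbox ((1/\<epsilon>) *\<^sub>R x)"

definition mu_eps :: "(real \<times> real) measure \<Rightarrow> real \<Rightarrow> real \<times> real \<Rightarrow> real" where
  "mu_eps M \<epsilon> x = (\<integral>y. chi_eps \<epsilon> (x - y) \<partial>M)"

definition compact_radon :: "(real \<times> real) measure \<Rightarrow> bool" where
  "compact_radon M \<longleftrightarrow> sets M = sets borel \<and> finite_measure M \<and>
     (\<exists>C. compact C \<and> emeasure M (UNIV - C) = 0)"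

definition slab_avg :: "(real \<times> real) measure \<Rightarrow> real \<Rightarrow> (real \<times> real \<Rightarrow> real) \<Rightarrow> real \<Rightarrow> real" where
  "slab_avg M t \<eta> \<delta> = (1 / (2 * \<delta>)) *
     (\<integral>x. indicator (rho2 -` {t - \<delta> <..< t + \<delta>}) x * \<eta> x \<partial>M)"

definition slice_exists :: "(real \<times> real) measure \<Rightarrow> real \<Rightarrow> bool" where
  "slice_exists M t \<longleftrightarrow>
     (\<forall>\<eta>. continuous_on UNIV \<eta> \<longrightarrow> (\<exists>L. (slab_avg M t \<eta> \<longlongrightarrow> L) (at_right 0)))"

definition slice_integral :: "(real \<times> real) measure \<Rightarrow> real \<Rightarrow> (real \<times> real \<Rightarrow> real) \<Rightarrow> real" where
  "slice_integral M t \<eta> = Lim (at_right 0) (slab_avg M t \<eta>)"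

definition sup_compact :: "(real \<times> real \<Rightarrow> real) set \<Rightarrow> bool" where
  "sup_compact K \<longleftrightarrow> (\<forall>f :: nat \<Rightarrow> real \<times> real \<Rightarrow> real. (\<forall>n. f n \<in> K) \<longrightarrow>
     (\<exists>r g. strict_mono r \<and> g \<in> K \<and> uniform_limit (UNIV :: (real \<times> real) set) (\<lambda>n. f (r n)) g sequentially))"

end

theory Submission
  imports Defs
begin

lemma chi_expand:
  assumes "0 < \<epsilon>"
  shows "chi_eps \<epsilon> ((s,t) - y) = inverse (\<epsilon>^2) * indicator {fst y - \<epsilon>/2 <..< fst y + \<epsilon>/2} s
           * indicator (rho2 -` {t - \<epsilon>/2 <..< t + \<epsilon>/2}) y"
proof -
  have "(-1/2 < (s - fst y)/\<epsilon> \<and> (s - fst y)/\<epsilon> < 1/2) \<longleftrightarrow> (fst y - \<epsilon>/2 < s \<and> s < fst y + \<epsilon>/2)"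
    using assms by (auto simp: field_simps)
  moreover have "(-1/2 < (t - snd y)/\<epsilon> \<and> (t - snd y)/\<epsilon> < 1/2) \<longleftrightarrow> (t - \<epsilon>/2 < snd y \<and> snd y < t + \<epsilon>/2)"
    using assms by (auto simp: field_simps)
  ultimately show ?thesis
    unfolding chi_eps_def Qbox_def rho2_def
    by (cases y) (auto simp: indicator_def power_int_def power_inverse)
qed

lemma meas:
  assumes sM: "sets M = sets (borel :: (real\<times>real) measure)" and \<eta>: "continuous_on UNIV \<eta>"
  shows "(\<lambda>z. \<eta> (snd z, t) * chi_eps \<epsilon> ((snd z, t) - fst z)) \<in> borel_measurable (M \<Otimes>\<^sub>M lborel)"
proof -
  have e: "measurable (M \<Otimes>\<^sub>M lborel) (borel::real measure) = measurable (borel \<Otimes>\<^sub>M borel) borel"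
    by (rule measurable_cong_sets) (auto intro!: sets_pair_measure_cong sM)
  have Qo: "open Qbox" unfolding Qbox_def
    by (intro open_Collect_conj open_Collect_less continuous_intros)
  have c1: "continuous_on UNIV (\<lambda>z::(real\<times>real)\<times>real. \<eta> (snd z, t))"
    by (rule continuous_on_compose2[OF \<eta>]) (auto intro!: continuous_intros)
  have "(\<lambda>z::(real\<times>real)\<times>real. indicator Qbox ((1/\<epsilon>) *\<^sub>R ((snd z, t) - fst z)) :: real) \<in> borel_measurable borel"
    apply (rule measurable_compose[where f="\<lambda>z. (1/\<epsilon>) *\<^sub>R ((snd z, t) - fst z)" and N=borel])
     apply (rule borel_measurable_continuous_onI) apply (auto intro!: continuous_intros)[1]
    using Qo by (auto intro!: borel_measurable_indicator)
  then have "(\<lambda>z::(real\<times>real)\<times>real. \<eta> (snd z, t) * chi_eps \<epsilon> ((snd z, t) - fst z)) \<in> borel_measurable borel"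
    unfolding chi_eps_def
    by (intro borel_measurable_times borel_measurable_continuous_onI[OF c1]) auto
  then show ?thesis unfolding e borel_prod .
qed
lemma core:
  fixes M :: "(real\<times>real) measure" and \<eta> :: "real\<times>real \<Rightarrow> real"
  assumes sM: "sets M = sets borel" and fin: "finite_measure M"
    and Cc: "compact C" and C0: "emeasure M (UNIV - C) = 0"
    and \<eta>: "continuous_on UNIV \<eta>" and e: "0 < \<epsilon>"
    and bnd: "\<And>y s. y \<in> C \<Longrightarrow> \<bar>s - fst y\<bar> < \<epsilon>/2 \<Longrightarrow> \<bar>t - snd y\<bar> < \<epsilon>/2 \<Longrightarrow> \<bar>\<eta> (s,t) - \<eta> y\<bar> \<le> b"
  shows "\<bar>(\<integral>s. \<eta> (s,t) * mu_eps M \<epsilon> (s,t) \<partial>lborel) - slab_avg M t \<eta> (\<epsilon>/2)\<bar>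
          \<le> b * slab_avg M t (\<lambda>_. 1) (\<epsilon>/2)"
proof -
  interpret finite_measure M by (rule fin)
  interpret P: pair_sigma_finite M lborel
    by (intro pair_sigma_finite.intro sigma_finite_measure_axioms lborel.sigma_finite_measure_axioms)
  have spM: "space M = UNIV" using sets_eq_imp_space_eq[OF sM] by simp
  have mM: "\<And>g::real\<times>real\<Rightarrow>real. g \<in> borel_measurable borel \<Longrightarrow> g \<in> borel_measurable M"
    using measurable_cong_sets[OF sM refl] by blast
  have AEC: "AE y in M. y \<in> C"
  proof (rule AE_I')
    have "UNIV - C \<in> sets M" unfolding sM using compact_imp_closed[OF Cc]
      by (simp add: Compl_eq_Diff_UNIV[symmetric] borel_open open_Compl)
    then show "UNIV - C \<in> null_sets M" using C0 by (simp add: null_setsI)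
  qed (auto simp: spM)
  obtain R where R: "\<And>y. y \<in> C \<Longrightarrow> \<bar>fst y\<bar> \<le> R"
  proof -
    have "compact (fst ` C)" by (intro compact_continuous_image continuous_intros Cc)
    then obtain R where "\<forall>x\<in>fst ` C. norm x \<le> R" using compact_imp_bounded bounded_iff by metis
    then show ?thesis using that by auto
  qed
  define D where "D = C \<union> ({-R-\<epsilon>..R+\<epsilon>} \<times> {t})"
  have "compact D" unfolding D_def by (intro compact_Un Cc compact_Times compact_Icc) auto
  then have "compact (\<eta> ` D)" by (intro compact_continuous_image continuous_on_subset[OF \<eta>]) auto
  then obtain B0 where "\<forall>x\<in>\<eta> ` D. norm x \<le> B0" using compact_imp_bounded bounded_iff by metis
  then have B: "\<And>x. x \<in> D \<Longrightarrow> \<bar>\<eta> x\<bar> \<le> \<bar>B0\<bar>" by force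
  define B where "B = \<bar>B0\<bar>"
  have B: "\<And>x. x \<in> D \<Longrightarrow> \<bar>\<eta> x\<bar> \<le> B" and B0: "0 \<le> B" using B by (auto simp: B_def)
  define I where "I y = {fst y - \<epsilon>/2 <..< fst y + \<epsilon>/2}" for y :: "real\<times>real"
  define S where "S = rho2 -` {t - \<epsilon>/2 <..< t + \<epsilon>/2}"
  define f where "f z = \<eta> (snd z, t) * chi_eps \<epsilon> ((snd z, t) - fst z)" for z :: "(real\<times>real)\<times>real"
  have fy: "f (y,s) = inverse (\<epsilon>^2) * (\<eta> (s,t) * indicator (I y) s) * indicator S y" for y s
    unfolding f_def I_def S_def using chi_expand[OF e, of s t y] by simp
  have fmeas: "f \<in> borel_measurable (M \<Otimes>\<^sub>M lborel)" unfolding f_def by (rule meas[OF sM \<eta>])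
  have Iint: "integrable lborel (indicator (I y) :: real \<Rightarrow> real)" for y
    unfolding I_def using e by (intro integrable_real_indicator) auto
  have Imeas: "integral\<^sup>L lborel (indicator (I y) :: real \<Rightarrow> real) = \<epsilon>" for y
    unfolding I_def using e by simp
  have inD: "(s,t) \<in> D" if "y \<in> C" "s \<in> I y" for y s
    using R[OF that(1)] that(2) unfolding D_def I_def by auto
  have g1int: "integrable lborel (\<lambda>s. \<eta> (s,t) * indicator (I y) s)" if "y \<in> C" for y
  proof (rule Bochner_Integration.integrable_bound[OF integrable_mult_right[OF Iint[of y], of B]])
    have "(\<lambda>s. \<eta> (s,t)) \<in> borel_measurable lborel"
      unfolding measurable_lborel2 by (intro borel_measurable_continuous_onI continuous_on_compose2[OF \<eta>]) (auto intro!: continuous_intros)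
    then show "(\<lambda>s. \<eta> (s,t) * indicator (I y) s) \<in> borel_measurable lborel"
      by (intro borel_measurable_times borel_measurable_indicator) (auto simp: I_def)
    show "AE s in lborel. norm (\<eta> (s,t) * indicator (I y) s) \<le> norm (B * indicator (I y) s)"
      using B inD[OF that] B0 by (auto simp: indicator_def abs_mult)
  qed
  have integ2: "integrable lborel (\<lambda>s. f (y,s))" if "y \<in> C" for y
    unfolding fy by (intro integrable_mult_left integrable_mult_right g1int that)
  have fabs: "(\<integral>s. norm (f (y,s)) \<partial>lborel) \<le> B / \<epsilon>" if "y \<in> C" for y
  proof -
    have "(\<integral>s. norm (f (y,s)) \<partial>lborel) \<le> (\<integral>s. inverse (\<epsilon>^2) * (B * indicator (I y) s) \<partial>lborel)"
      apply (rule integral_mono)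
      using integ2[OF that] apply simp
      using Iint apply simp
      using B inD[OF that] B0 e by (auto simp: fy indicator_def abs_mult)
    also have "\<dots> = B / \<epsilon>" using Imeas[of y] e by (simp add: power2_eq_square field_simps)
    finally show ?thesis .
  qed
  have integ1: "integrable M (\<lambda>y. \<integral>s. norm (f (y,s)) \<partial>lborel)"
  proof (rule integrable_const_bound[where B="B/\<epsilon>"])
    show "AE x in M. norm (\<integral>s. norm (f (x,s)) \<partial>lborel) \<le> B / \<epsilon>"
      using AEC by eventually_elim (use fabs in auto)
    have "(\<lambda>z. norm (f z)) \<in> borel_measurable (M \<Otimes>\<^sub>M lborel)" using fmeas by measurable
    then show "(\<lambda>y. \<integral>s. norm (f (y,s)) \<partial>lborel) \<in> borel_measurable M"
      by (intro lborel.borel_measurable_lebesgue_integral) simp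
  qed
  have fint: "integrable (M \<Otimes>\<^sub>M lborel) f"
    by (rule P.Fubini_integrable[OF fmeas integ1]) (use AEC integ2 in auto)
  have fint': "integrable (M \<Otimes>\<^sub>M lborel) (case_prod (\<lambda>y s. f (y,s)))" using fint by simp
  have Fub: "(\<integral>s. (\<integral>y. f (y,s) \<partial>M) \<partial>lborel) = (\<integral>y. (\<integral>s. f (y,s) \<partial>lborel) \<partial>M)"
    using P.Fubini_integral[OF fint'] .
  have F: "(\<integral>s. \<eta> (s,t) * mu_eps M \<epsilon> (s,t) \<partial>lborel) = (\<integral>y. (\<integral>s. f (y,s) \<partial>lborel) \<partial>M)"
    unfolding Fub[symmetric] unfolding f_def mu_eps_def by simp
  have Gint: "integrable M (\<lambda>y. \<integral>s. f (y,s) \<partial>lborel)" using P.integrable_fst'[OF fint] by simp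
  have Smeas: "indicator S \<in> borel_measurable M"
  proof -
    have "open S" unfolding S_def rho2_def
      by (simp add: vimage_def greaterThanLessThan_iff, intro open_Collect_conj open_Collect_less continuous_intros)
    then show ?thesis unfolding sM[symmetric] measurable_cong_sets[OF sM refl] by (intro borel_measurable_indicator) auto
  qed
  have \<eta>meas: "\<eta> \<in> borel_measurable M" by (intro mM borel_measurable_continuous_onI \<eta>)
  have Hint: "integrable M (\<lambda>y. indicator S y * \<eta> y)"
  proof (rule integrable_const_bound[where B=B])
    show "AE x in M. norm (indicator S x * \<eta> x) \<le> B"
      using AEC by eventually_elim (use B B0 D_def in \<open>auto simp: indicator_def\<close>)
  qed (use Smeas \<eta>meas in measurable)
  have Oint: "integrable M (\<lambda>y. indicator S y * (1::real))"
    by (rule integrable_const_bound[where B=1]) (use Smeas in \<open>auto simp: indicator_def[abs_def] indicator_def\<close>)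
  have slab: "slab_avg M t g (\<epsilon>/2) = (1/\<epsilon>) * (\<integral>y. indicator S y * g y \<partial>M)" for g
    unfolding slab_avg_def S_def by simp
  have pt: "\<bar>(\<integral>s. f (y,s) \<partial>lborel) - (1/\<epsilon>) * (indicator S y * \<eta> y)\<bar> \<le> b/\<epsilon> * (indicator S y * 1)"
    if yC: "y \<in> C" for y
  proof (cases "y \<in> S")
    case False then show ?thesis by (simp add: fy)
  next
    case True
    have yt: "\<bar>t - snd y\<bar> < \<epsilon>/2" using True unfolding S_def rho2_def by (auto split: abs_split)
    have i2: "integrable lborel (\<lambda>s. \<eta> y * indicator (I y) s)" using Iint by simp
    have "\<bar>(\<integral>s. \<eta> (s,t) * indicator (I y) s - \<eta> y * indicator (I y) s \<partial>lborel)\<bar>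
        \<le> (\<integral>s. \<bar>\<eta> (s,t) * indicator (I y) s - \<eta> y * indicator (I y) s\<bar> \<partial>lborel)"
      by (rule integral_abs_bound)
    also have "\<dots> \<le> (\<integral>s. b * indicator (I y) s \<partial>lborel)"
      apply (rule integral_mono)
      using g1int[OF yC] i2 apply simp
      using Iint apply simp
      using bnd[OF yC _ yt] by (auto simp: indicator_def I_def abs_minus_commute split: abs_split)
    also have "\<dots> = b * \<epsilon>" using Imeas by simp
    finally have *: "\<bar>(\<integral>s. \<eta> (s,t) * indicator (I y) s \<partial>lborel) - \<eta> y * \<epsilon>\<bar> \<le> b * \<epsilon>"
      using Imeas[of y] by (simp add: Bochner_Integration.integral_diff[OF g1int[OF yC] i2])
    have "(\<integral>s. f (y,s) \<partial>lborel) - (1/\<epsilon>) * (indicator S y * \<eta> y)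
        = inverse (\<epsilon>^2) * ((\<integral>s. \<eta> (s,t) * indicator (I y) s \<partial>lborel) - \<eta> y * \<epsilon>)"
      using True e by (simp add: fy power2_eq_square field_simps)
    also have "\<bar>\<dots>\<bar> \<le> inverse (\<epsilon>^2) * (b * \<epsilon>)"
      unfolding abs_mult using * e by (simp add: mult_left_mono)
    finally show ?thesis using True e by (simp add: power2_eq_square field_simps)
  qed
  have "(\<integral>s. \<eta> (s,t) * mu_eps M \<epsilon> (s,t) \<partial>lborel) - slab_avg M t \<eta> (\<epsilon>/2)
      = (\<integral>y. (\<integral>s. f (y,s) \<partial>lborel) - (1/\<epsilon>) * (indicator S y * \<eta> y) \<partial>M)"
    unfolding F slab by (subst Bochner_Integration.integral_diff[OF Gint integrable_mult_right[OF Hint]]) simp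
  also have "\<bar>\<dots>\<bar> \<le> (\<integral>y. \<bar>(\<integral>s. f (y,s) \<partial>lborel) - (1/\<epsilon>) * (indicator S y * \<eta> y)\<bar> \<partial>M)"
    by (rule integral_abs_bound)
  also have "\<dots> \<le> (\<integral>y. b/\<epsilon> * (indicator S y * 1) \<partial>M)"
    apply (rule integral_mono_AE)
    using Gint Hint apply simp
    using Oint apply simp
    using AEC by eventually_elim (use pt in auto)
  also have "\<dots> = b * slab_avg M t (\<lambda>_. 1) (\<epsilon>/2)" unfolding slab by simp
  finally show ?thesis .
qed

context
  fixes M :: "(real\<times>real) measure" and C :: "(real\<times>real) set" and t :: real
  assumes sM: "sets M = sets borel" and fin: "finite_measure M" and Cc: "compact C"
    and C0: "emeasure M (UNIV - C) = 0"
begin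

lemma AEC: "AE y in M. y \<in> C"
proof (rule AE_I')
  have "UNIV - C \<in> sets M" unfolding sM using compact_imp_closed[OF Cc]
    by (simp add: Compl_eq_Diff_UNIV[symmetric] borel_open open_Compl)
  then show "UNIV - C \<in> null_sets M" using C0 by (simp add: null_setsI)
qed (use sets_eq_imp_space_eq[OF sM] in auto)

lemma slab_int:
  fixes h :: "real\<times>real \<Rightarrow> real"
  assumes h: "continuous_on UNIV h"
  shows "integrable M (\<lambda>x. indicator (rho2 -` {a<..<b}) x * h x)"
proof -
  interpret finite_measure M by (rule fin)
  have "compact (h ` C)" by (intro compact_continuous_image continuous_on_subset[OF h] Cc) auto
  then obtain B where B: "\<forall>x\<in>h ` C. norm x \<le> B" using compact_imp_bounded bounded_iff by metis
  have "open (rho2 -` {a<..<b})"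
  proof -
    have "rho2 -` {a<..<b} = {x. a < snd x \<and> snd x < b}" by (auto simp: rho2_def)
    then show ?thesis by (simp, intro open_Collect_conj open_Collect_less continuous_intros)
  qed
  then have Sm: "indicator (rho2 -` {a<..<b}) \<in> borel_measurable M"
    unfolding measurable_cong_sets[OF sM refl] by (intro borel_measurable_indicator) auto
  have hm: "h \<in> borel_measurable M"
    unfolding measurable_cong_sets[OF sM refl] by (intro borel_measurable_continuous_onI h)
  show ?thesis
  proof (rule integrable_const_bound[where B=B])
    show "AE x in M. norm (indicator (rho2 -` {a<..<b}) x * h x) \<le> B"
      using AEC by eventually_elim (use B in \<open>auto simp: indicator_def\<close>)
  qed (use Sm hm in measurable)
qed

lemma slab_diff:
  fixes h g :: "real\<times>real \<Rightarrow> real"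
  assumes h: "continuous_on UNIV h" and g: "continuous_on UNIV g"
    and c: "\<And>x. \<bar>h x - g x\<bar> \<le> c" and d: "0 < \<delta>"
  shows "\<bar>slab_avg M t h \<delta> - slab_avg M t g \<delta>\<bar> \<le> c * slab_avg M t (\<lambda>_. 1) \<delta>"
proof -
  let ?S = "rho2 -` {t - \<delta><..<t + \<delta>}"
  have i1: "integrable M (\<lambda>x. indicator ?S x * h x)" by (rule slab_int[OF h])
  have i2: "integrable M (\<lambda>x. indicator ?S x * g x)" by (rule slab_int[OF g])
  have i3: "integrable M (\<lambda>x. indicator ?S x * (1::real))" by (rule slab_int) auto
  have "\<bar>(\<integral>x. indicator ?S x * h x \<partial>M) - (\<integral>x. indicator ?S x * g x \<partial>M)\<bar>
      = \<bar>\<integral>x. indicator ?S x * h x - indicator ?S x * g x \<partial>M\<bar>"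
    by (simp add: Bochner_Integration.integral_diff[OF i1 i2])
  also have "\<dots> \<le> (\<integral>x. \<bar>indicator ?S x * h x - indicator ?S x * g x\<bar> \<partial>M)"
    by (rule integral_abs_bound)
  also have "\<dots> \<le> (\<integral>x. c * (indicator ?S x * 1) \<partial>M)"
    apply (rule integral_mono)
    using i1 i2 apply simp
    using i3 apply simp
    using c by (auto simp: indicator_def)
  also have "\<dots> = c * (\<integral>x. indicator ?S x * 1 \<partial>M)" by simp
  finally have *: "\<bar>(\<integral>x. indicator ?S x * h x \<partial>M) - (\<integral>x. indicator ?S x * g x \<partial>M)\<bar>
      \<le> c * (\<integral>x. indicator ?S x * 1 \<partial>M)" .
  have "slab_avg M t h \<delta> - slab_avg M t g \<delta>
     = (1/(2*\<delta>)) * ((\<integral>x. indicator ?S x * h x \<partial>M) - (\<integral>x. indicator ?S x * g x \<partial>M))"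
    unfolding slab_avg_def by (simp add: algebra_simps)
  also have "\<bar>\<dots>\<bar> \<le> (1/(2*\<delta>)) * (c * (\<integral>x. indicator ?S x * 1 \<partial>M))"
    unfolding abs_mult using * d abs_of_pos[of "1/(2*\<delta>)"] by (simp add: divide_right_mono)
  also have "\<dots> = c * slab_avg M t (\<lambda>_. 1) \<delta>" unfolding slab_avg_def by simp
  finally show ?thesis .
qed

lemma UC:
  fixes g :: "real\<times>real \<Rightarrow> real"
  assumes g: "continuous_on UNIV g" and e: "0 < e"
  shows "eventually (\<lambda>\<epsilon>. \<forall>y\<in>C. \<forall>s. \<bar>s - fst y\<bar> < \<epsilon>/2 \<longrightarrow> \<bar>t - snd y\<bar> < \<epsilon>/2 \<longrightarrow>
            \<bar>g (s,t) - g y\<bar> \<le> e) (at_right 0)"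
proof -
  define D where "D = C \<union> (\<lambda>p. (fst (fst p) + snd p, t)) ` (C \<times> {-1..1})"
  have "compact D" unfolding D_def
    by (intro compact_Un Cc compact_continuous_image compact_Times compact_Icc continuous_intros)
  then have "uniformly_continuous_on D g"
    by (intro compact_uniformly_continuous continuous_on_subset[OF g]) auto
  then obtain d where d: "d > 0" and dd: "\<And>x x'. x \<in> D \<Longrightarrow> x' \<in> D \<Longrightarrow> dist x' x < d \<Longrightarrow> dist (g x') (g x) < e"
    unfolding uniformly_continuous_on_def using e by metis
  show ?thesis unfolding eventually_at_right_field
  proof (intro exI[of _ "min d 1"] conjI allI impI ballI)
    show "0 < min d 1" using d by simp
    fix \<epsilon> y s assume \<epsilon>: "0 < \<epsilon>" "\<epsilon> < min d 1" and yC: "y \<in> C"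
      and h1: "\<bar>s - fst y\<bar> < \<epsilon>/2" and h2: "\<bar>t - snd y\<bar> < \<epsilon>/2"
    have "(s,t) = (\<lambda>p. (fst (fst p) + snd p, t)) (y, s - fst y)" by simp
    moreover have "(y, s - fst y) \<in> C \<times> {-1..1}" proof -
      have "\<bar>s - fst y\<bar> < 1" using h1 \<epsilon> by simp
      then show ?thesis using yC by (simp add: abs_less_iff)
    qed
    ultimately have sD: "(s,t) \<in> D" unfolding D_def by blast
    have yD: "y \<in> D" using yC D_def by auto
    have "dist (s,t) y \<le> \<bar>s - fst y\<bar> + \<bar>t - snd y\<bar>"
      unfolding dist_prod_def dist_real_def using sqrt_sum_squares_le_sum_abs by simp
    also have "\<dots> < d" using h1 h2 \<epsilon> by simp
    finally have "dist (g (s,t)) (g y) < e" using dd[OF yD sD] by simp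
    then show "\<bar>g (s,t) - g y\<bar> \<le> e" by (simp add: dist_real_def)
  qed
qed

end

theorem lemma3p1:
  fixes M :: "(real \<times> real) measure" and t :: real
  assumes "compact_radon M"
    and "slice_exists M t"
  shows "(\<forall>\<eta>. continuous_on UNIV \<eta> \<longrightarrow>
            ((\<lambda>\<epsilon>. \<integral>s. \<eta> (s, t) * mu_eps M \<epsilon> (s, t) \<partial>lborel)
               \<longlongrightarrow> slice_integral M t \<eta>) (at_right 0))
      \<and> (\<forall>K. K \<subseteq> {\<eta>. continuous_on UNIV \<eta>} \<and> sup_compact K \<longrightarrow>
            uniform_limit K (\<lambda>\<epsilon> \<eta>. \<integral>s. \<eta> (s, t) * mu_eps M \<epsilon> (s, t) \<partial>lborel)
              (slice_integral M t) (at_right 0))"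
proof -
  obtain C where sM: "sets M = sets borel" and fin: "finite_measure M" and Cc: "compact C"
    and C0: "emeasure M (UNIV - C) = 0"
    using assms(1) unfolding compact_radon_def by blast
  define SL where "SL = slice_integral M t"
  define Fe where "Fe \<eta> \<epsilon> = (\<integral>s. \<eta> (s, t) * mu_eps M \<epsilon> (s, t) \<partial>lborel)" for \<eta> \<epsilon>
  have SLt: "(slab_avg M t \<eta> \<longlongrightarrow> SL \<eta>) (at_right 0)" if eta: "continuous_on UNIV \<eta>" for \<eta>
  proof -
    obtain L where L: "(slab_avg M t \<eta> \<longlongrightarrow> L) (at_right 0)"
      using assms(2) eta unfolding slice_exists_def by blast
    then have "SL \<eta> = L" unfolding SL_def slice_integral_def by (intro tendsto_Lim) auto
    then show ?thesis using L by simp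
  qed
  have half: "filterlim (\<lambda>\<epsilon>::real. \<epsilon>/2) (at_right 0) (at_right 0)"
    unfolding filterlim_at
  proof
    show "\<forall>\<^sub>F x in at_right 0. x / 2 \<in> {0::real<..} \<and> x / 2 \<noteq> 0"
      using eventually_at_right_less[of "0::real"] by eventually_elim auto
    have "((\<lambda>x::real. x / 2) \<longlongrightarrow> 0 / 2) (at_right 0)"
      by (intro tendsto_intros tendsto_ident_at) simp
    then show "((\<lambda>x::real. x / 2) \<longlongrightarrow> 0) (at_right 0)" by simp
  qed
  have SLt2: "((\<lambda>\<epsilon>. slab_avg M t \<eta> (\<epsilon>/2)) \<longlongrightarrow> SL \<eta>) (at_right 0)" if "continuous_on UNIV \<eta>" for \<eta>
    using filterlim_compose[OF SLt[OF that] half] .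
  define L1 where "L1 = SL (\<lambda>_. 1)"
  define M1 where "M1 = \<bar>L1\<bar> + 1"
  have M1: "M1 > 0" "\<bar>L1\<bar> \<le> M1" unfolding M1_def by auto
  have S1ev: "eventually (\<lambda>\<epsilon>. slab_avg M t (\<lambda>_. 1) (\<epsilon>/2) < M1) (at_right 0)"
    using order_tendstoD(2)[OF SLt2[of "\<lambda>_. 1"], of M1] M1_def L1_def by auto
  have SLdiff: "\<bar>SL h - SL g\<bar> \<le> c * M1"
    if h: "continuous_on UNIV h" and g: "continuous_on UNIV g" and c: "\<And>x. \<bar>h x - g x\<bar> \<le> c" for h g c
  proof -
    have c0: "0 \<le> c" using c[of 0] by linarith
    have "\<bar>SL h - SL g\<bar> \<le> c * L1"
    proof (rule tendsto_le[OF trivial_limit_at_right_real])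
      show "((\<lambda>\<delta>. c * slab_avg M t (\<lambda>_. 1) \<delta>) \<longlongrightarrow> c * L1) (at_right 0)"
        unfolding L1_def by (intro tendsto_intros SLt) auto
      show "((\<lambda>\<delta>. \<bar>slab_avg M t h \<delta> - slab_avg M t g \<delta>\<bar>) \<longlongrightarrow> \<bar>SL h - SL g\<bar>) (at_right 0)"
        by (intro tendsto_intros SLt h g)
      show "\<forall>\<^sub>F \<delta> in at_right 0. \<bar>slab_avg M t h \<delta> - slab_avg M t g \<delta>\<bar> \<le> c * slab_avg M t (\<lambda>_. 1) \<delta>"
        using eventually_at_right_less[of "0::real"]
        by eventually_elim (rule slab_diff[OF sM fin Cc C0 h g c])
    qed
    also have "\<dots> \<le> c * M1" using c0 M1 by (intro mult_left_mono) auto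
    finally show ?thesis .
  qed
  have UNI: "uniform_limit K (\<lambda>\<epsilon> \<eta>. Fe \<eta> \<epsilon>) SL (at_right 0)"
    if K: "K \<subseteq> {\<eta>. continuous_on UNIV \<eta>}" and sc: "sup_compact K" for K
    unfolding uniform_limit_iff
  proof (intro allI impI)
    fix r :: real assume r: "r > 0"
    let ?P = "\<lambda>\<epsilon>. \<forall>\<eta>\<in>K. dist (Fe \<eta> \<epsilon>) (SL \<eta>) < r"
    show "eventually ?P (at_right 0)"
    proof (rule ccontr)
      assume neg: "\<not> eventually ?P (at_right 0)"
      have ex: "\<exists>p. 0 < fst p \<and> fst p < inverse (real (Suc n)) \<and> snd p \<in> K \<and> \<not> dist (Fe (snd p) (fst p)) (SL (snd p)) < r" for n
      proof (rule ccontr)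
        assume "\<not> ?thesis"
        then have "\<forall>\<epsilon>>0. \<epsilon> < inverse (real (Suc n)) \<longrightarrow> ?P \<epsilon>" by force
        then have "eventually ?P (at_right 0)"
          unfolding eventually_at_right_field by (intro exI[of _ "inverse (real (Suc n))"]) auto
        then show False using neg by blast
      qed
      obtain p where p: "\<And>n. 0 < fst (p n) \<and> fst (p n) < inverse (real (Suc n)) \<and> snd (p n) \<in> K \<and>
          \<not> dist (Fe (snd (p n)) (fst (p n))) (SL (snd (p n))) < r"
      proof -
        have "\<forall>n. \<exists>p. 0 < fst p \<and> fst p < inverse (real (Suc n)) \<and> snd p \<in> K \<and> \<not> dist (Fe (snd p) (fst p)) (SL (snd p)) < r"
          using ex by blast
        from choice[OF this] show ?thesis using that by blast
      qed
      define es where "es n = fst (p n)" for n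
      define etas where "etas n = snd (p n)" for n
      have ee: "0 < es n \<and> es n < inverse (real (Suc n)) \<and> etas n \<in> K \<and>
          \<not> dist (Fe (etas n) (es n)) (SL (etas n)) < r" for n
        using p[of n] unfolding es_def etas_def .
      have etasK: "\<And>n. etas n \<in> K" using ee by blast
      obtain \<rho> g where \<rho>: "strict_mono \<rho>" and gK: "g \<in> K"
        and ul: "uniform_limit UNIV (\<lambda>n. etas (\<rho> n)) g sequentially"
        using sc[unfolded sup_compact_def, THEN spec[of _ etas]] etasK by blast
      have gc: "continuous_on UNIV g" using gK K by auto
      have esl: "es \<longlonglongrightarrow> 0"
      proof (rule tendsto_sandwich[OF _ _ tendsto_const LIMSEQ_inverse_real_of_nat])
        show "\<forall>\<^sub>F n in sequentially. 0 \<le> es n" using ee by (simp add: less_imp_le)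
        show "\<forall>\<^sub>F n in sequentially. es n \<le> inverse (real (Suc n))" using ee by (simp add: less_imp_le)
      qed
      have fl: "filterlim (\<lambda>n. es (\<rho> n)) (at_right 0) sequentially"
        unfolding filterlim_at using ee LIMSEQ_subseq_LIMSEQ[OF esl \<rho>]
        by (auto simp: o_def less_imp_neq[symmetric])
      define c where "c = r / (8 * M1)"
      have c0: "c > 0" unfolding c_def using r M1 by auto
      have e1: "eventually (\<lambda>\<epsilon>. (0::real) < \<epsilon>) (at_right 0)" by (rule eventually_at_right_less)
      have e3: "eventually (\<lambda>\<epsilon>. \<forall>y\<in>C. \<forall>s. \<bar>s - fst y\<bar> < \<epsilon>/2 \<longrightarrow> \<bar>t - snd y\<bar> < \<epsilon>/2 \<longrightarrow> \<bar>g (s,t) - g y\<bar> \<le> c) (at_right 0)"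
        by (rule UC[OF sM fin Cc C0 gc c0])
      have e4: "eventually (\<lambda>\<epsilon>. dist (slab_avg M t g (\<epsilon>/2)) (SL g) < r/4) (at_right 0)"
        using tendstoD[OF SLt2[OF gc], of "r/4"] r by simp
      have ev: "eventually (\<lambda>\<epsilon>. 0 < \<epsilon> \<and> slab_avg M t (\<lambda>_. 1) (\<epsilon>/2) < M1 \<and>
            (\<forall>y\<in>C. \<forall>s. \<bar>s - fst y\<bar> < \<epsilon>/2 \<longrightarrow> \<bar>t - snd y\<bar> < \<epsilon>/2 \<longrightarrow> \<bar>g (s,t) - g y\<bar> \<le> c) \<and>
            dist (slab_avg M t g (\<epsilon>/2)) (SL g) < r/4) (at_right 0)"
        using e1 S1ev e3 e4 by eventually_elim blast
      have ev2: "eventually (\<lambda>n. \<forall>x. dist (etas (\<rho> n) x) (g x) < c) sequentially"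
        using ul c0 unfolding uniform_limit_iff by auto
      note ev3 = filterlim_iff[THEN iffD1, OF fl, rule_format, OF ev]
      have "eventually (\<lambda>n. (0 < es (\<rho> n) \<and> slab_avg M t (\<lambda>_. 1) (es (\<rho> n)/2) < M1 \<and>
            (\<forall>y\<in>C. \<forall>s. \<bar>s - fst y\<bar> < es (\<rho> n)/2 \<longrightarrow> \<bar>t - snd y\<bar> < es (\<rho> n)/2 \<longrightarrow> \<bar>g (s,t) - g y\<bar> \<le> c) \<and>
            dist (slab_avg M t g (es (\<rho> n)/2)) (SL g) < r/4) \<and> (\<forall>x. dist (etas (\<rho> n) x) (g x) < c)) sequentially"
        by (rule eventually_conj[OF ev3 ev2])
      then obtain N where "\<forall>n\<ge>N. (0 < es (\<rho> n) \<and> slab_avg M t (\<lambda>_. 1) (es (\<rho> n)/2) < M1 \<and>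
            (\<forall>y\<in>C. \<forall>s. \<bar>s - fst y\<bar> < es (\<rho> n)/2 \<longrightarrow> \<bar>t - snd y\<bar> < es (\<rho> n)/2 \<longrightarrow> \<bar>g (s,t) - g y\<bar> \<le> c) \<and>
            dist (slab_avg M t g (es (\<rho> n)/2)) (SL g) < r/4) \<and> (\<forall>x. dist (etas (\<rho> n) x) (g x) < c)"
        unfolding eventually_sequentially by blast
      then obtain n where n1: "0 < es (\<rho> n)" and n2: "slab_avg M t (\<lambda>_. 1) (es (\<rho> n)/2) < M1"
        and n3: "\<forall>y\<in>C. \<forall>s. \<bar>s - fst y\<bar> < es (\<rho> n)/2 \<longrightarrow> \<bar>t - snd y\<bar> < es (\<rho> n)/2 \<longrightarrow> \<bar>g (s,t) - g y\<bar> \<le> c"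
        and n4: "dist (slab_avg M t g (es (\<rho> n)/2)) (SL g) < r/4"
        and n5: "\<forall>x. dist (etas (\<rho> n) x) (g x) < c"
        by blast
      define \<epsilon> where "\<epsilon> = es (\<rho> n)"
      define \<eta> where "\<eta> = etas (\<rho> n)"
      have \<eta>c: "continuous_on UNIV \<eta>" using ee K unfolding \<eta>_def by auto
      have hg: "\<bar>\<eta> x - g x\<bar> \<le> c" for x using n5[rule_format, of x] unfolding \<eta>_def dist_real_def by (simp only: less_imp_le)
      have S1pos: "slab_avg M t (\<lambda>_. 1) (\<epsilon>/2) \<le> M1" using n2 unfolding \<epsilon>_def by simp
      have "\<bar>Fe \<eta> \<epsilon> - slab_avg M t \<eta> (\<epsilon>/2)\<bar> \<le> (c + 2*c) * slab_avg M t (\<lambda>_. 1) (\<epsilon>/2)"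
        unfolding Fe_def
      proof (rule core[OF sM fin Cc C0 \<eta>c])
        show "0 < \<epsilon>" using n1 \<epsilon>_def by simp
        fix y s assume "y \<in> C" "\<bar>s - fst y\<bar> < \<epsilon>/2" "\<bar>t - snd y\<bar> < \<epsilon>/2"
        then have "\<bar>g (s,t) - g y\<bar> \<le> c" using n3 \<epsilon>_def by auto
        then show "\<bar>\<eta> (s,t) - \<eta> y\<bar> \<le> c + 2*c" using hg[of "(s,t)"] hg[of y] by linarith
      qed
      also have "\<dots> \<le> (c + 2*c) * M1" using S1pos c0 by (intro mult_left_mono) auto
      finally have a1: "\<bar>Fe \<eta> \<epsilon> - slab_avg M t \<eta> (\<epsilon>/2)\<bar> \<le> 3*c*M1" by simp
      have "\<bar>slab_avg M t \<eta> (\<epsilon>/2) - slab_avg M t g (\<epsilon>/2)\<bar> \<le> c * slab_avg M t (\<lambda>_. 1) (\<epsilon>/2)"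
        using n1 by (intro slab_diff[OF sM fin Cc C0 \<eta>c gc hg]) (simp add: \<epsilon>_def)
      also have "\<dots> \<le> c * M1" using S1pos c0 by (intro mult_left_mono) auto
      finally have a2: "\<bar>slab_avg M t \<eta> (\<epsilon>/2) - slab_avg M t g (\<epsilon>/2)\<bar> \<le> c * M1" .
      have a3: "\<bar>SL \<eta> - SL g\<bar> \<le> c * M1" by (rule SLdiff[OF \<eta>c gc hg])
      have a4: "\<bar>slab_avg M t g (\<epsilon>/2) - SL g\<bar> < r/4" using n4 unfolding \<epsilon>_def dist_real_def .
      have "c * M1 = r/8" unfolding c_def using M1 by simp
      then have "\<bar>Fe \<eta> \<epsilon> - SL \<eta>\<bar> < r" using a1 a2 a3 a4 by linarith
      then show False using ee[of "\<rho> n"] unfolding \<eta>_def \<epsilon>_def dist_real_def by simp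
    qed
  qed
  have P2: "\<forall>K. K \<subseteq> {\<eta>. continuous_on UNIV \<eta>} \<and> sup_compact K \<longrightarrow> uniform_limit K (\<lambda>\<epsilon> \<eta>. Fe \<eta> \<epsilon>) SL (at_right 0)"
    using UNI by blast
  have P1: "(Fe \<eta> \<longlongrightarrow> SL \<eta>) (at_right 0)" if \<eta>: "continuous_on UNIV \<eta>" for \<eta>
  proof -
    have "sup_compact {\<eta>}" unfolding sup_compact_def
    proof (intro allI impI)
      fix f :: "nat \<Rightarrow> real \<times> real \<Rightarrow> real" assume "\<forall>n. f n \<in> {\<eta>}"
      then have "f = (\<lambda>n. \<eta>)" by auto
      then show "\<exists>r g. strict_mono r \<and> g \<in> {\<eta>} \<and> uniform_limit UNIV (\<lambda>n. f (r n)) g sequentially"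
        by (intro exI[of _ id] exI[of _ \<eta>]) (auto simp: strict_mono_def uniform_limit_iff)
    qed
    then have "uniform_limit {\<eta>} (\<lambda>\<epsilon> \<eta>. Fe \<eta> \<epsilon>) SL (at_right 0)"
      by (intro UNI) (use \<eta> in auto)
    then have "\<forall>e>0. eventually (\<lambda>\<epsilon>. dist (Fe \<eta> \<epsilon>) (SL \<eta>) < e) (at_right 0)"
      unfolding uniform_limit_iff by simp
    then show ?thesis unfolding tendsto_iff .
  qed
  show ?thesis using P1 P2 unfolding Fe_def[abs_def] SL_def by blast
qed

end
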